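(* Let $A=(a_{jk})\in\mathbb C^{6\times 6}$ be a hermitian matrix such that $\bar zAz^T\geq 0$ for all $z\in\mathbb C^6$ with $z_1z_6+z_2z_5+z_3z_4=0$. Then $$\sum_{j,k=1}^{6}a_{jk}\,a_{7-j,7-k}\geq 0.$$ *)

theory Defs
  imports "HOL-Analysis.Analysis" "HOL-Library.Complex_Order"
begin

end

theory Submission
  imports Defs
begin

definition S6 :: "nat set" where "S6 = {1..6}"
definition ip :: "(nat \<Rightarrow> complex) \<Rightarrow> (nat \<Rightarrow> complex) \<Rightarrow> complex" where
  "ip u v = (\<Sum>i\<in>S6. cnj (u i) * v i)"
definition mv :: "(nat \<Rightarrow> nat \<Rightarrow> complex) \<Rightarrow> (nat \<Rightarrow> complex) \<Rightarrow> nat \<Rightarrow> complex" where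
  "mv H v = (\<lambda>i. \<Sum>j\<in>S6. H i j * v j)"
definition herm :: "(nat \<Rightarrow> nat \<Rightarrow> complex) \<Rightarrow> bool" where
  "herm H \<longleftrightarrow> (\<forall>i\<in>S6. \<forall>j\<in>S6. H j i = cnj (H i j))"
definition qf :: "(nat \<Rightarrow> nat \<Rightarrow> complex) \<Rightarrow> (nat \<Rightarrow> complex) \<Rightarrow> complex" where
  "qf H v = ip v (mv H v)"
definition orthonormal :: "(nat \<Rightarrow> complex) list \<Rightarrow> bool" where
  "orthonormal L \<longleftrightarrow> (\<forall>a<length L. \<forall>b<length L. ip (L!a) (L!b) = (if a = b then 1 else 0))"

lemma finite_S6[simp]: "finite S6" by (simp add: S6_def)

lemma ip_cnj: "cnj (ip u v) = ip v u"
  by (simp add: ip_def mult.commute)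

lemma ip_self: "ip v v = of_real (\<Sum>i\<in>S6. (cmod (v i))^2)"
  unfolding ip_def of_real_sum by (rule sum.cong, simp, simp only: of_real_power[symmetric] complex_norm_square mult.commute)

lemma ip_self_Re: "Re (ip v v) = (\<Sum>i\<in>S6. (cmod (v i))^2)"
  by (simp add: ip_self)

lemma ip_self_nonneg: "0 \<le> Re (ip v v)"
  by (simp add: ip_self_Re sum_nonneg)

lemma ip_self_Im: "Im (ip v v) = 0"
  by (simp add: ip_self)

lemma ip_sum_right: "ip u (\<lambda>i. \<Sum>a\<in>A. c a * w a i) = (\<Sum>a\<in>A. c a * ip u (w a))"
  unfolding ip_def by (simp add: sum_distrib_left sum_distrib_right mult_ac sum.swap[of _ A])

lemma ip_sum_left: "ip (\<lambda>i. \<Sum>a\<in>A. c a * w a i) u = (\<Sum>a\<in>A. cnj (c a) * ip (w a) u)"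
  unfolding ip_def by (simp add: sum_distrib_left sum_distrib_right mult_ac sum.swap[of _ A])

lemma ip_diff_right: "ip u (\<lambda>i. v i - w i) = ip u v - ip u w"
  unfolding ip_def by (simp add: algebra_simps sum_subtractf)

lemma ip_diff_left: "ip (\<lambda>i. v i - w i) u = ip v u - ip w u"
  unfolding ip_def by (simp add: algebra_simps sum_subtractf)

lemma bessel:
  assumes "orthonormal L"
  shows "(\<Sum>a<length L. (cmod (ip (L!a) x))^2) \<le> Re (ip x x)"
proof -
  define m where "m = length L"
  define c where "c a = ip (L!a) x" for a
  define s where "s = (\<lambda>i. \<Sum>a<m. c a * (L!a) i)"
  have on: "\<And>a b. a < m \<Longrightarrow> b < m \<Longrightarrow> ip (L!a) (L!b) = (if a = b then 1 else 0)"
    using assms unfolding orthonormal_def m_def by auto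
  have xs: "ip x s = (\<Sum>a<m. c a * cnj (c a))"
    unfolding s_def ip_sum_right c_def by (simp add: ip_cnj)
  have sx: "ip s x = (\<Sum>a<m. cnj (c a) * c a)"
    unfolding s_def ip_sum_left c_def by simp
  have ss: "ip s s = (\<Sum>a<m. cnj (c a) * c a)"
  proof -
    have "ip s s = (\<Sum>a<m. cnj (c a) * (\<Sum>b<m. c b * ip (L!a) (L!b)))"
      unfolding s_def ip_sum_left ip_sum_right ..
    also have "\<dots> = (\<Sum>a<m. cnj (c a) * c a)"
      by (rule sum.cong, simp, simp add: on if_distrib cong: if_cong)
    finally show ?thesis .
  qed
  have "ip (\<lambda>i. x i - s i) (\<lambda>i. x i - s i) = ip x x - ip x s - ip s x + ip s s"
    by (simp add: ip_diff_left ip_diff_right)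
  also have "\<dots> = ip x x - (\<Sum>a<m. c a * cnj (c a))"
    using xs sx ss by (simp add: mult.commute)
  finally have eq: "ip (\<lambda>i. x i - s i) (\<lambda>i. x i - s i) = ip x x - (\<Sum>a<m. c a * cnj (c a))" .
  have "Re (\<Sum>a<m. c a * cnj (c a)) = (\<Sum>a<m. (cmod (c a))^2)"
    by (simp add: complex_mult_cnj cmod_power2)
  moreover have "0 \<le> Re (ip (\<lambda>i. x i - s i) (\<lambda>i. x i - s i))" by (rule ip_self_nonneg)
  ultimately show ?thesis using eq unfolding c_def m_def by simp
qed

lemma card_S6: "card S6 = 6" by (simp add: S6_def)

lemma orthonormal_length:
  assumes "orthonormal L" shows "length L \<le> 6"
proof -
  define e where "e k = (\<lambda>i::nat. if i = k then (1::complex) else 0)" for k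
  have b: "(\<Sum>a<length L. (cmod ((L!a) k))^2) \<le> 1" if k: "k \<in> S6" for k
  proof -
    have "(\<Sum>a<length L. (cmod (ip (L!a) (e k)))^2) \<le> Re (ip (e k) (e k))"
      by (rule bessel[OF assms])
    moreover have "ip (L!a) (e k) = cnj ((L!a) k)" for a
      unfolding ip_def e_def using k by (simp add: if_distrib cong: if_cong)
    moreover have "ip (e k) (e k) = 1"
      unfolding ip_def e_def using k by (simp add: if_distrib cong: if_cong)
    ultimately show ?thesis by simp
  qed
  have "(\<Sum>k\<in>S6. \<Sum>a<length L. (cmod ((L!a) k))^2) \<le> (\<Sum>k\<in>S6. 1)"
    by (rule sum_mono, rule b)
  also have "\<dots> = 6" by (simp add: card_S6)
  finally have 1: "(\<Sum>a<length L. \<Sum>k\<in>S6. (cmod ((L!a) k))^2) \<le> 6"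
    by (subst sum.swap) simp
  have "(\<Sum>k\<in>S6. (cmod ((L!a) k))^2) = 1" if "a < length L" for a
  proof -
    have "ip (L!a) (L!a) = 1" using assms that unfolding orthonormal_def by auto
    then show ?thesis using ip_self_Re[of "L!a"] by simp
  qed
  then have "(\<Sum>a<length L. \<Sum>k\<in>S6. (cmod ((L!a) k))^2) = real (length L)"
    by simp
  with 1 show ?thesis by simp
qed

lemma herm_swap:
  assumes "herm H" shows "ip u (mv H v) = ip (mv H u) v"
proof -
  have "ip u (mv H v) = (\<Sum>i\<in>S6. \<Sum>j\<in>S6. cnj (u i) * (H i j * v j))"
    unfolding ip_def mv_def by (rule sum.cong, simp, rule sum_distrib_left)
  also have "\<dots> = (\<Sum>j\<in>S6. \<Sum>i\<in>S6. cnj (u i) * (H i j * v j))"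
    by (rule sum.swap)
  also have "\<dots> = (\<Sum>j\<in>S6. \<Sum>i\<in>S6. cnj (H j i * u i) * v j)"
  proof (rule sum.cong[OF refl], rule sum.cong[OF refl])
    fix j i assume ji: "j \<in> S6" "i \<in> S6"
    have "H i j = cnj (H j i)" using assms ji unfolding herm_def by blast
    then show "cnj (u i) * (H i j * v j) = cnj (H j i * u i) * v j" by simp
  qed
  also have "\<dots> = ip (mv H u) v"
    unfolding ip_def mv_def by (rule sum.cong[OF refl]) (simp add: sum_distrib_right)
  finally show ?thesis .
qed

lemma qf_real: assumes "herm H" shows "cnj (qf H v) = qf H v"
  unfolding qf_def ip_cnj using herm_swap[OF assms] by simp

lemma qf_Im: assumes "herm H" shows "Im (qf H v) = 0"
  using arg_cong[OF qf_real[OF assms, of v], of Im] by simp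

lemma qf_real': assumes "herm H" shows "qf H v = of_real (Re (qf H v))"
  using qf_Im[OF assms, of v] by (simp add: complex_eq_iff)

lemma ip_cong: "(\<And>i. i \<in> S6 \<Longrightarrow> u i = u' i) \<Longrightarrow> (\<And>i. i \<in> S6 \<Longrightarrow> v i = v' i) \<Longrightarrow> ip u v = ip u' v'"
  unfolding ip_def by (rule sum.cong) auto

lemma mv_cong: "(\<And>i. i \<in> S6 \<Longrightarrow> v i = v' i) \<Longrightarrow> mv H v i = mv H v' i"
  unfolding mv_def by (rule sum.cong) auto

lemma qf_cong: "(\<And>i. i \<in> S6 \<Longrightarrow> v i = v' i) \<Longrightarrow> qf H v = qf H v'"
  unfolding qf_def by (rule ip_cong) (auto intro: mv_cong)

lemma mv_scale: "mv H (\<lambda>i. c * v i) = (\<lambda>i. c * mv H v i)"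
  unfolding mv_def by (simp add: sum_distrib_left mult_ac)

lemma ip_scale_left: "ip (\<lambda>i. c * v i) w = cnj c * ip v w"
  unfolding ip_def by (simp add: sum_distrib_left mult_ac)

lemma ip_scale_right: "ip w (\<lambda>i. c * v i) = c * ip w v"
  unfolding ip_def by (simp add: sum_distrib_left mult_ac)

lemma qf_scale: "qf H (\<lambda>i. c * v i) = cnj c * c * qf H v"
  unfolding qf_def mv_scale ip_scale_left ip_scale_right by simp

lemma sum_delta_r: "i \<in> S6 \<Longrightarrow> (\<Sum>j\<in>S6. f j * (if j = i then a else 0)) = f i * (a::complex)"
proof -
  assume i: "i \<in> S6"
  have "(\<Sum>j\<in>S6. f j * (if j = i then a else 0)) = (\<Sum>j\<in>S6. if j = i then f i * a else 0)"
    by (rule sum.cong) auto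
  also have "\<dots> = f i * a" using i by simp
  finally show ?thesis .
qed
lemma sum_delta_l: "i \<in> S6 \<Longrightarrow> (\<Sum>j\<in>S6. (if j = i then a else 0) * f j) = a * (f i::complex)"
  using sum_delta_r[of i f a] by (simp add: mult.commute)

lemma qf2:
  assumes i: "i \<in> S6" and j: "j \<in> S6"
  shows "qf H (\<lambda>k. (if k = i then a else 0) + (if k = j then b else 0)) =
     cnj a * a * H i i + cnj a * b * H i j + cnj b * a * H j i + cnj b * b * H j j"
proof -
  have m: "mv H (\<lambda>k. (if k = i then a else 0) + (if k = j then b else 0)) = (\<lambda>k. H k i * a + H k j * b)"
    unfolding mv_def distrib_left sum.distrib sum_delta_r[OF i] sum_delta_r[OF j] ..
  have "qf H (\<lambda>k. (if k = i then a else 0) + (if k = j then b else 0)) =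
     (\<Sum>k\<in>S6. (if k = i then cnj a else 0) * (H k i * a + H k j * b)) + (\<Sum>k\<in>S6. (if k = j then cnj b else 0) * (H k i * a + H k j * b))"
    unfolding qf_def m ip_def sum.distrib[symmetric] by (rule sum.cong) (auto simp: distrib_right)
  also have "\<dots> = cnj a * (H i i * a + H i j * b) + cnj b * (H j i * a + H j j * b)"
    unfolding sum_delta_l[OF i] sum_delta_l[OF j] ..
  finally show ?thesis by (simp add: algebra_simps)
qed

lemma herm_zero:
  assumes h: "herm H" and z: "\<And>v. qf H v = 0" and i: "i \<in> S6" and j: "j \<in> S6"
  shows "H i j = 0"
proof -
  have hii: "H k k = 0" if "k \<in> S6" for k
    using z[of "\<lambda>l. (if l = k then 1 else 0) + (if l = k then 0 else 0)"] qf2[OF that that, of H 1 0] by simp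
  have 1: "H i j + H j i = 0"
    using z[of "\<lambda>k. (if k = i then 1 else 0) + (if k = j then 1 else 0)"] qf2[OF i j, of H 1 1] hii i j by simp
  have 2: "\<i> * H i j - \<i> * H j i = 0"
    using z[of "\<lambda>k. (if k = i then 1 else 0) + (if k = j then \<i> else 0)"] qf2[OF i j, of H 1 \<i>] hii i j by simp
  from 2 have "\<i> * (H i j - H j i) = 0" by (simp add: algebra_simps)
  then have 3: "H i j - H j i = 0" by simp
  have "2 * H i j = (H i j + H j i) + (H i j - H j i)" by simp
  then have "2 * H i j = 0" using 1 3 by simp
  then show ?thesis by simp
qed

lemma quad0: fixes a b :: real assumes h: "\<And>t. a * t + b * t^2 \<le> 0" shows "a = 0"
proof (rule ccontr)
  assume a: "a \<noteq> 0"
  define c where "c = \<bar>b\<bar> + 1"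
  have c: "c > 0" "\<bar>b\<bar> \<le> c" by (auto simp: c_def)
  define t where "t = a / (2 * c)"
  have 1: "a * t = a^2 / (2*c)" by (simp add: t_def power2_eq_square)
  have 2: "b * t^2 \<ge> - (\<bar>b\<bar> * t^2)" by (simp add: abs_mult_pos abs_le_iff mult_right_mono)
  have 3: "\<bar>b\<bar> * t^2 \<le> c * t^2" using c by (simp add: mult_right_mono)
  have 4: "c * t^2 = a^2 / (4 * c)" using c by (simp add: t_def power2_eq_square field_simps)
  have 5: "a^2 > 0" using a by simp
  have "a * t + b * t^2 \<ge> a^2/(2*c) - a^2/(4*c)" using 1 2 3 4 by linarith
  moreover have "a^2/(2*c) - a^2/(4*c) = a^2/(4*c)" using c by (simp add: field_simps)
  moreover have "a^2/(4*c) > 0" using c 5 by simp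
  ultimately show False using h[of t] by linarith
qed

lemma S6_eq: "S6 = {1,2,3,4,5,6}" by (auto simp: S6_def)

lemma sum_S6: "(\<Sum>i\<in>S6. f i) = f 1 + f 2 + f 3 + f 4 + f 5 + f 6"
  by (simp add: S6_eq add.assoc)

type_synonym c6 = "complex \<times> complex \<times> complex \<times> complex \<times> complex \<times> complex"

definition tv :: "c6 \<Rightarrow> nat \<Rightarrow> complex" where
  "tv p i = (if i = 1 then fst p else if i = 2 then fst (snd p) else if i = 3 then fst (snd (snd p))
     else if i = 4 then fst (snd (snd (snd p))) else if i = 5 then fst (snd (snd (snd (snd p))))
     else snd (snd (snd (snd (snd p)))))"

definition vt :: "(nat \<Rightarrow> complex) \<Rightarrow> c6" where
  "vt v = (v 1, v 2, v 3, v 4, v 5, v 6)"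

lemma tv_vt: "i \<in> S6 \<Longrightarrow> tv (vt v) i = v i"
  by (auto simp: S6_eq tv_def vt_def)

lemma norm_tv: "(norm p)^2 = Re (ip (tv p) (tv p))"
proof -
  obtain a b c d e f where p: "p = (a,b,c,d,e,f)" by (cases p) auto
  show ?thesis unfolding ip_self_Re sum_S6 by (simp add: p tv_def norm_Pair)
qed

lemma cont_tv: "continuous_on UNIV (\<lambda>p. tv p i)"
  by (cases "i=1"; cases "i=2"; cases "i=3"; cases "i=4"; cases "i=5") (simp_all add: tv_def continuous_intros)

lemma cont_qf: "continuous_on UNIV (\<lambda>p. Re (qf H (tv p)))"
  unfolding qf_def ip_def mv_def
  by (intro continuous_intros cont_tv)

lemma mv_add: "mv H (\<lambda>i. u i + v i) = (\<lambda>i. mv H u i + mv H v i)"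
  unfolding mv_def by (simp add: distrib_left sum.distrib)

lemma ip_add_left: "ip (\<lambda>i. u i + v i) w = ip u w + ip v w"
  unfolding ip_def by (simp add: distrib_right sum.distrib)

lemma ip_add_right: "ip w (\<lambda>i. u i + v i) = ip w u + ip w v"
  unfolding ip_def by (simp add: distrib_left sum.distrib)

lemma qf_line: "qf K (\<lambda>i. v i + c * w i) = qf K v + c * ip v (mv K w) + cnj c * ip w (mv K v) + cnj c * c * qf K w"
  unfolding qf_def mv_add mv_scale ip_add_left ip_add_right ip_scale_left ip_scale_right
  by (simp add: algebra_simps)

lemma ip_zero_iff: "Re (ip v v) = 0 \<Longrightarrow> i \<in> S6 \<Longrightarrow> v i = 0"
  unfolding ip_self_Re by (subst (asm) sum_nonneg_eq_0_iff) auto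

lemma qf_zero: "(\<And>i. i \<in> S6 \<Longrightarrow> v i = 0) \<Longrightarrow> qf H v = 0"
  unfolding qf_def ip_def by simp

lemma herm_shift:
  assumes h: "herm H"
  shows "herm (\<lambda>i j. H i j - (if i = j then complex_of_real M else 0))"
  unfolding herm_def
proof (intro ballI)
  fix i j assume ij: "i \<in> S6" "j \<in> S6"
  have "H j i = cnj (H i j)" using h ij unfolding herm_def by blast
  then show "H j i - (if j = i then complex_of_real M else 0) = cnj (H i j - (if i = j then complex_of_real M else 0))"
    by auto
qed

lemma mv_shift: "i0 \<in> S6 \<Longrightarrow> mv (\<lambda>i j. H i j - (if i = j then complex_of_real M else 0)) w i0 = mv H w i0 - of_real M * w i0"
proof -
  assume i0: "i0 \<in> S6"
  have "mv (\<lambda>i j. H i j - (if i = j then complex_of_real M else 0)) w i0 =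
     mv H w i0 - (\<Sum>j\<in>S6. (if j = i0 then of_real M else 0) * w j)"
    unfolding mv_def by (simp add: left_diff_distrib sum_subtractf eq_commute[of i0])
  also have "\<dots> = mv H w i0 - of_real M * w i0" using sum_delta_l[OF i0] by simp
  finally show ?thesis .
qed

lemma qf_shift: "qf (\<lambda>i j. H i j - (if i = j then complex_of_real M else 0)) w = qf H w - of_real M * ip w w"
proof -
  have "qf (\<lambda>i j. H i j - (if i = j then complex_of_real M else 0)) w = ip w (\<lambda>i. mv H w i - of_real M * w i)"
    unfolding qf_def by (rule ip_cong) (auto simp: mv_shift)
  then show ?thesis unfolding ip_diff_right ip_scale_right qf_def .
qed

lemma max_eig:
  assumes h: "herm H"
  shows "\<exists>v M. Re (ip v v) = 1 \<and> (\<forall>i\<in>S6. mv H v i = of_real M * v i) \<and> (\<forall>w. Re (qf H w) \<le> M * Re (ip w w))"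
proof -
  have ne: "(1,0,0,0,0,0) \<in> sphere (0::c6) 1" by (simp add: norm_Pair)
  have "\<exists>p\<in>sphere (0::c6) 1. \<forall>q\<in>sphere 0 1. Re (qf H (tv q)) \<le> Re (qf H (tv p))"
    by (rule continuous_attains_sup) (use ne in \<open>auto intro: continuous_on_subset[OF cont_qf]\<close>)
  then obtain p where p: "norm p = 1" and pmax: "\<And>q. norm q = 1 \<Longrightarrow> Re (qf H (tv q)) \<le> Re (qf H (tv p))"
    by auto
  define v where "v = tv p"
  define M where "M = Re (qf H v)"
  have vunit: "Re (ip v v) = 1" using norm_tv[of p] p unfolding v_def by simp
  have bound: "Re (qf H w) \<le> M * Re (ip w w)" for w
  proof (cases "Re (ip w w) = 0")
    case True
    then have "qf H w = 0" by (intro qf_zero) (rule ip_zero_iff)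
    then show ?thesis using True by simp
  next
    case False
    define s where "s = Re (ip w w)"
    have s: "s > 0" using False ip_self_nonneg[of w] unfolding s_def by linarith
    define c where "c = 1 / sqrt s"
    have c2: "c^2 = 1 / s" using s by (simp add: c_def power_divide)
    define w' where "w' = (\<lambda>i. complex_of_real c * w i)"
    have ipw': "Re (ip w' w') = c^2 * s"
      unfolding w'_def ip_scale_left ip_scale_right s_def by (simp add: power2_eq_square)
    have "ip (tv (vt w')) (tv (vt w')) = ip w' w'" by (rule ip_cong) (auto simp: tv_vt)
    then have "(norm (vt w'))^2 = 1" using norm_tv[of "vt w'"] ipw' c2 s by simp
    then have "norm (vt w') = 1" using norm_ge_zero[of "vt w'"] power2_eq_1_iff[of "norm (vt w')"] by linarith
    from pmax[OF this] have "Re (qf H (tv (vt w'))) \<le> M" unfolding M_def v_def .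
    moreover have "qf H (tv (vt w')) = qf H w'" by (rule qf_cong) (auto simp: tv_vt)
    moreover have "qf H w' = of_real (c^2) * qf H w"
      unfolding w'_def qf_scale by (simp add: power2_eq_square)
    ultimately have "c^2 * Re (qf H w) \<le> M" by simp
    then have "Re (qf H w) / s \<le> M" using c2 by simp
    then show ?thesis using s unfolding s_def[symmetric] by (simp add: divide_le_eq mult.commute)
  qed
  define K where "K = (\<lambda>i j. H i j - (if i = j then complex_of_real M else 0))"
  have hK: "herm K" unfolding K_def by (rule herm_shift[OF h])
  have qK: "qf K w = qf H w - of_real M * ip w w" for w unfolding K_def by (rule qf_shift)
  have Kle: "Re (qf K w) \<le> 0" for w using bound[of w] ip_self_Im[of w] unfolding qK by simp
  have Kv: "Re (qf K v) = 0" using vunit ip_self_Im[of v] unfolding qK M_def by simp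
  have orth: "Re (ip w (mv K v)) = 0" for w
  proof -
    have "\<And>t. (2 * Re (ip w (mv K v))) * t + Re (qf K w) * t^2 \<le> 0"
    proof -
      fix t :: real
      have "qf K (\<lambda>i. v i + of_real t * w i) = qf K v + of_real t * ip v (mv K w) + of_real t * ip w (mv K v) + of_real t * of_real t * qf K w"
        by (simp add: qf_line)
      also have "ip v (mv K w) = cnj (ip w (mv K v))" using herm_swap[OF hK, of v w] ip_cnj by simp
      finally have "Re (qf K (\<lambda>i. v i + of_real t * w i)) = Re (qf K v) + t * Re (ip w (mv K v)) + t * Re (ip w (mv K v)) + t * t * Re (qf K w)"
        by simp
      then show "(2 * Re (ip w (mv K v))) * t + Re (qf K w) * t^2 \<le> 0"
        using Kle[of "\<lambda>i. v i + of_real t * w i"] Kv by (simp add: power2_eq_square algebra_simps)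
    qed
    then have "2 * Re (ip w (mv K v)) = 0" by (rule quad0)
    then show ?thesis by simp
  qed
  have "mv K v i = 0" if "i \<in> S6" for i using ip_zero_iff[OF orth[of "mv K v"] that] .
  then have "\<forall>i\<in>S6. mv H v i = of_real M * v i" unfolding K_def using mv_shift by simp
  then show ?thesis using vunit bound by blast
qed

lemma herm_neg: "herm H \<Longrightarrow> herm (\<lambda>i j. - H i j)"
  unfolding herm_def by (metis complex_cnj_minus)

lemma mv_neg: "mv (\<lambda>i j. - H i j) w i = - mv H w i"
  unfolding mv_def by (simp add: sum_negf)

lemma qf_neg: "qf (\<lambda>i j. - H i j) w = - qf H w"
proof -
  have "mv (\<lambda>i j. - H i j) w = (\<lambda>i. (-1) * mv H w i)" by (rule ext) (simp add: mv_neg)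
  then show ?thesis unfolding qf_def using ip_scale_right[of w "-1" "mv H w"] by simp
qed

lemma eig_nonzero:
  assumes h: "herm H" and nz: "\<exists>i\<in>S6. \<exists>j\<in>S6. H i j \<noteq> 0"
  shows "\<exists>v l. Re (ip v v) = 1 \<and> l \<noteq> 0 \<and> (\<forall>i\<in>S6. mv H v i = of_real l * v i)"
proof -
  obtain v1 M1 where 1: "Re (ip v1 v1) = 1" "\<forall>i\<in>S6. mv H v1 i = of_real M1 * v1 i"
     "\<forall>w. Re (qf H w) \<le> M1 * Re (ip w w)" using max_eig[OF h] by blast
  obtain v2 M2 where 2: "Re (ip v2 v2) = 1" "\<forall>i\<in>S6. mv (\<lambda>i j. - H i j) v2 i = of_real M2 * v2 i"
     "\<forall>w. Re (qf (\<lambda>i j. - H i j) w) \<le> M2 * Re (ip w w)" using max_eig[OF herm_neg[OF h]] by blast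
  show ?thesis
  proof (cases "M1 = 0")
    case False then show ?thesis using 1 by blast
  next
    case M1: True
    show ?thesis
    proof (cases "M2 = 0")
      case False
      have "\<forall>i\<in>S6. mv H v2 i = of_real (- M2) * v2 i"
        using 2(2) by (simp add: mv_neg) (metis minus_equation_iff)
      then show ?thesis using 2(1) False by (intro exI[of _ v2] exI[of _ "- M2"]) simp
    next
      case M2: True
      have "qf H w = 0" for w
      proof -
        have "Re (qf H w) \<le> 0" using 1(3) M1 by simp
        moreover have "- Re (qf H w) \<le> 0" using 2(3) M2 by (simp add: qf_neg)
        ultimately have "Re (qf H w) = 0" by simp
        then show ?thesis using qf_real'[OF h, of w] by simp
      qed
      then have "\<forall>i\<in>S6. \<forall>j\<in>S6. H i j = 0" using herm_zero[OF h] by blast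
      then show ?thesis using nz by blast
    qed
  qed
qed

definition fro :: "(nat \<Rightarrow> nat \<Rightarrow> complex) \<Rightarrow> real" where
  "fro X = (\<Sum>i\<in>S6. \<Sum>j\<in>S6. (cmod (X i j))^2)"

definition Fc :: "(nat \<Rightarrow> nat \<Rightarrow> complex) \<Rightarrow> complex" where
  "Fc X = (\<Sum>i\<in>S6. \<Sum>j\<in>S6. X i j * cnj (X i j))"

lemma fro_Fc: "complex_of_real (fro X) = Fc X"
  unfolding fro_def Fc_def of_real_sum
  by (intro sum.cong refl) (simp only: of_real_power[symmetric] complex_norm_square)

lemma ip_unit: "Re (ip v v) = 1 \<Longrightarrow> ip v v = 1"
  using ip_self_Im[of v] by (simp add: complex_eq_iff)

lemma Fc_update:
  assumes h: "herm H" and v: "ip v v = 1" and ev: "\<forall>i\<in>S6. mv H v i = of_real l * v i"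
  shows "Fc (\<lambda>i j. H i j - of_real l * v i * cnj (v j)) = Fc H - of_real (l^2)"
proof -
  have pt: "(H i j - of_real l * v i * cnj (v j)) * cnj (H i j - of_real l * v i * cnj (v j)) =
      H i j * cnj (H i j) - of_real l * (cnj (v i) * (H i j * v j)) - of_real l * (v i * (cnj (H i j) * cnj (v j)))
      + of_real l * of_real l * ((v i * cnj (v i)) * (v j * cnj (v j)))" for i j
    by (simp add: algebra_simps)
  have qv: "qf H v = of_real l"
  proof -
    have "qf H v = ip v (\<lambda>i. of_real l * v i)" unfolding qf_def by (rule ip_cong) (auto simp: ev)
    then show ?thesis using v by (simp add: ip_scale_right)
  qed
  have s1: "(\<Sum>i\<in>S6. \<Sum>j\<in>S6. cnj (v i) * (H i j * v j)) = of_real l"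
    using qv unfolding qf_def ip_def mv_def by (simp add: sum_distrib_left)
  have s2: "(\<Sum>i\<in>S6. \<Sum>j\<in>S6. v i * (cnj (H i j) * cnj (v j))) = of_real l"
  proof -
    have "(\<Sum>i\<in>S6. \<Sum>j\<in>S6. v i * (cnj (H i j) * cnj (v j))) = cnj (\<Sum>i\<in>S6. \<Sum>j\<in>S6. cnj (v i) * (H i j * v j))"
      by simp
    then show ?thesis using s1 by simp
  qed
  have s3: "(\<Sum>i\<in>S6. \<Sum>j\<in>S6. (v i * cnj (v i)) * (v j * cnj (v j))) = 1"
  proof -
    have "(\<Sum>i\<in>S6. \<Sum>j\<in>S6. (v i * cnj (v i)) * (v j * cnj (v j))) = ip v v * ip v v"
      unfolding ip_def by (simp add: sum_distrib_left sum_distrib_right mult_ac)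
    then show ?thesis using v by simp
  qed
  have "Fc (\<lambda>i j. H i j - of_real l * v i * cnj (v j)) =
     (\<Sum>i\<in>S6. \<Sum>j\<in>S6. H i j * cnj (H i j)) - of_real l * (\<Sum>i\<in>S6. \<Sum>j\<in>S6. cnj (v i) * (H i j * v j))
      - of_real l * (\<Sum>i\<in>S6. \<Sum>j\<in>S6. v i * (cnj (H i j) * cnj (v j)))
      + of_real l * of_real l * (\<Sum>i\<in>S6. \<Sum>j\<in>S6. (v i * cnj (v i)) * (v j * cnj (v j)))"
    unfolding Fc_def pt by (simp only: sum.distrib sum_subtractf sum_distrib_left)
  also have "\<dots> = Fc H - of_real (l^2)" unfolding s1 s2 s3 Fc_def by (simp add: power2_eq_square)
  finally show ?thesis .
qed

lemma orthonormal_Cons: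
  assumes ww: "orthonormal Os" and v: "ip v v = 1" and p: "\<forall>ww\<in>set Os. ip ww v = 0"
  shows "orthonormal (v # Os)"
  unfolding orthonormal_def
proof (intro allI impI)
  fix a b assume a: "a < length (v # Os)" and b: "b < length (v # Os)"
  have pv: "ip v (Os!b') = 0" if "b' < length Os" for b'
    using p that ip_cnj[of "Os!b'" v] by (metis complex_cnj_zero nth_mem)
  have pv': "ip (Os!b') v = 0" if "b' < length Os" for b'
    using p that by (metis nth_mem)
  show "ip ((v # Os) ! a) ((v # Os) ! b) = (if a = b then 1 else 0)"
  proof (cases a)
    case 0 then show ?thesis using v pv b by (cases b) auto
  next
    case (Suc a')
    then show ?thesis using pv' a b ww unfolding orthonormal_def by (cases b) auto
  qed
qed

lemma eig_orth:
  assumes h: "herm H" and ww: "\<forall>i\<in>S6. mv H ww i = 0" and ev: "\<forall>i\<in>S6. mv H v i = of_real l * v i" and l: "l \<noteq> 0"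
  shows "ip ww v = 0"
proof -
  have "of_real l * ip ww v = ip ww (\<lambda>i. of_real l * v i)" by (simp add: ip_scale_right)
  also have "\<dots> = ip ww (mv H v)" by (rule ip_cong) (auto simp: ev)
  also have "\<dots> = ip (mv H ww) v" by (rule herm_swap[OF h])
  also have "\<dots> = ip (\<lambda>_. 0) v" by (rule ip_cong) (auto simp: ww)
  also have "\<dots> = 0" by (simp add: ip_def)
  finally show ?thesis using l by simp
qed

lemma herm_update:
  assumes h: "herm H"
  shows "herm (\<lambda>i j. H i j - of_real l * v i * cnj (v j))"
  unfolding herm_def
proof (intro ballI)
  fix i j assume ij: "i \<in> S6" "j \<in> S6"
  have "H j i = cnj (H i j)" using h ij unfolding herm_def by blast
  then show "H j i - of_real l * v j * cnj (v i) = cnj (H i j - of_real l * v i * cnj (v j))"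
    by (simp add: mult_ac)
qed

lemma mv_update: "mv (\<lambda>i j. H i j - of_real l * v i * cnj (v j)) w i = mv H w i - of_real l * v i * ip v w"
proof -
  have e: "(H i j - of_real l * v i * cnj (v j)) * w j = H i j * w j - (of_real l * v i) * (cnj (v j) * w j)" for j
    by (simp add: algebra_simps)
  show ?thesis unfolding mv_def ip_def e sum_subtractf sum_distrib_left ..
qed

lemma spec_aux:
  "herm H \<Longrightarrow> orthonormal Os \<Longrightarrow> (\<forall>ww\<in>set Os. \<forall>i\<in>S6. mv H ww i = 0) \<Longrightarrow> 6 \<le> length Os + n \<Longrightarrow>
   \<exists>us ls. length us = length ls \<and> orthonormal us \<and>
     (\<forall>a<length us. ls!a \<noteq> 0 \<and> (\<forall>i\<in>S6. mv H (us!a) i = of_real (ls!a) * (us!a) i)) \<and>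
     fro H = (\<Sum>a<length ls. (ls!a)^2)"
proof (induction n arbitrary: H Os)
  case (0 H Os)
  show ?case
  proof (cases "\<exists>i\<in>S6. \<exists>j\<in>S6. H i j \<noteq> 0")
    case False
    then have "fro H = 0" unfolding fro_def by simp
    then show ?thesis by (intro exI[of _ "[]"]) (simp add: orthonormal_def)
  next
    case True
    obtain v l where v: "Re (ip v v) = 1" "l \<noteq> 0" "\<forall>i\<in>S6. mv H v i = of_real l * v i"
      using eig_nonzero[OF 0(1) True] by blast
    have "orthonormal (v # Os)"
      using orthonormal_Cons[OF 0(2) ip_unit[OF v(1)]] eig_orth[OF 0(1) _ v(3) v(2)] 0(3) by blast
    from orthonormal_length[OF this] 0(4) show ?thesis by simp
  qed
next
  case (Suc n H Os)
  show ?case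
  proof (cases "\<exists>i\<in>S6. \<exists>j\<in>S6. H i j \<noteq> 0")
    case False
    then have "fro H = 0" unfolding fro_def by simp
    then show ?thesis by (intro exI[of _ "[]"]) (simp add: orthonormal_def)
  next
    case True
    obtain v l where v: "Re (ip v v) = 1" "l \<noteq> 0" "\<forall>i\<in>S6. mv H v i = of_real l * v i"
      using eig_nonzero[OF Suc(2) True] by blast
    have vv: "ip v v = 1" using ip_unit[OF v(1)] .
    have on: "orthonormal (v # Os)"
      using orthonormal_Cons[OF Suc(3) vv] eig_orth[OF Suc(2) _ v(3) v(2)] Suc(4) by blast
    define H' where "H' = (\<lambda>i j. H i j - of_real l * v i * cnj (v j))"
    have h': "herm H'" unfolding H'_def by (rule herm_update[OF Suc(2)])
    have mvH': "mv H' w i = mv H w i - of_real l * v i * ip v w" for w i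
      unfolding H'_def by (rule mv_update)
    have ker: "\<forall>ww\<in>set (v # Os). \<forall>i\<in>S6. mv H' ww i = 0"
    proof
      fix ww assume "ww \<in> set (v # Os)"
      then consider "ww = v" | "ww \<in> set Os" by auto
      then show "\<forall>i\<in>S6. mv H' ww i = 0"
      proof cases
        case 1 then show ?thesis using v(3) vv by (simp add: mvH')
      next
        case 2
        have "ip v ww = 0" using eig_orth[OF Suc(2) _ v(3) v(2), of ww] 2 Suc(4) ip_cnj[of ww v]
          by (metis complex_cnj_zero)
        then show ?thesis using 2 Suc(4) by (simp add: mvH')
      qed
    qed
    obtain us ls where IH: "length us = length ls" "orthonormal us"
      "\<forall>a<length us. ls!a \<noteq> 0 \<and> (\<forall>i\<in>S6. mv H' (us!a) i = of_real (ls!a) * (us!a) i)"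
      "fro H' = (\<Sum>a<length ls. (ls!a)^2)"
      using Suc(1)[OF h' on ker] Suc(5) by auto
    have vu: "ip v (us!a) = 0" if "a < length us" for a
      using eig_orth[OF h' _ , of v "us!a" "ls!a"] IH(3) that ker by auto
    have evH: "\<forall>i\<in>S6. mv H (us!a) i = of_real (ls!a) * (us!a) i" if "a < length us" for a
    proof -
      have "\<forall>i\<in>S6. mv H' (us!a) i = of_real (ls!a) * (us!a) i" using IH(3) that by blast
      then show ?thesis by (simp add: mvH' vu[OF that])
    qed
    have on2: "orthonormal (v # us)"
    proof (rule orthonormal_Cons[OF IH(2) vv])
      show "\<forall>ww\<in>set us. ip ww v = 0"
        using vu ip_cnj by (metis complex_cnj_zero in_set_conv_nth)
    qed
    have "complex_of_real (fro H') = Fc H - of_real (l^2)"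
      unfolding fro_Fc H'_def by (rule Fc_update[OF Suc(2) vv v(3)])
    then have "fro H' = fro H - l^2" unfolding fro_Fc[symmetric]
      by (metis of_real_diff of_real_eq_iff)
    then have fro: "fro H = (\<Sum>a<length (l # ls). ((l # ls)!a)^2)"
    proof -
      have "(\<Sum>a<length (l # ls). ((l # ls)!a)^2) = l^2 + (\<Sum>a<length ls. (ls!a)^2)"
        by (simp only: length_Cons sum.lessThan_Suc_shift) simp
      then show ?thesis using IH(4) \<open>fro H' = fro H - l^2\<close> by linarith
    qed
    show ?thesis
    proof (intro exI conjI)
      show "length (v # us) = length (l # ls)" using IH(1) by simp
      show "orthonormal (v # us)" by (rule on2)
      show "\<forall>a<length (v # us). (l # ls) ! a \<noteq> 0 \<and> (\<forall>i\<in>S6. mv H ((v # us) ! a) i = of_real ((l # ls) ! a) * ((v # us) ! a) i)"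
      proof (intro allI impI)
        fix a assume "a < length (v # us)"
        then show "(l # ls) ! a \<noteq> 0 \<and> (\<forall>i\<in>S6. mv H ((v # us) ! a) i = of_real ((l # ls) ! a) * ((v # us) ! a) i)"
          using v(2,3) IH(3) evH by (cases a) auto
      qed
      show "fro H = (\<Sum>a<length (l # ls). ((l # ls)!a)^2)" by (rule fro)
    qed
  qed
qed

lemma spectral:
  assumes "herm H"
  shows "\<exists>us ls. length us = length ls \<and> orthonormal us \<and>
     (\<forall>a<length us. ls!a \<noteq> 0 \<and> (\<forall>i\<in>S6. mv H (us!a) i = of_real (ls!a) * (us!a) i)) \<and>
     fro H = (\<Sum>a<length ls. (ls!a)^2)"
  using spec_aux[OF assms, of "[]" 6] by (simp add: orthonormal_def)

definition Jc :: "(nat \<Rightarrow> complex) \<Rightarrow> nat \<Rightarrow> complex" where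
  "Jc u = (\<lambda>i. cnj (u (7 - i)))"

definition star :: "(nat \<Rightarrow> nat \<Rightarrow> complex) \<Rightarrow> nat \<Rightarrow> nat \<Rightarrow> complex" where
  "star X = (\<lambda>i j. cnj (X (7 - i) (7 - j)))"

lemma reidx: "(\<Sum>i\<in>S6. f (7 - i)) = (\<Sum>i\<in>S6. f i)"
  by (simp add: sum_S6 ac_simps)

lemma S6_7: "i \<in> S6 \<Longrightarrow> 7 - i \<in> S6" "i \<in> S6 \<Longrightarrow> 7 - (7 - i) = i"
  by (auto simp: S6_def)

lemma mv_mcong: "(\<And>j. j \<in> S6 \<Longrightarrow> X i j = Y i j) \<Longrightarrow> mv X u i = mv Y u i"
  unfolding mv_def by (rule sum.cong) auto

lemma qf_mcong: "(\<And>i j. i \<in> S6 \<Longrightarrow> j \<in> S6 \<Longrightarrow> X i j = Y i j) \<Longrightarrow> qf X u = qf Y u"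
  unfolding qf_def by (rule ip_cong) (auto intro: mv_mcong)

lemma mv_star: "mv (star X) (Jc u) i = cnj (mv X u (7 - i))"
proof -
  have "mv (star X) (Jc u) i = cnj (\<Sum>j\<in>S6. X (7 - i) (7 - j) * u (7 - j))"
    unfolding mv_def star_def Jc_def by simp
  also have "(\<Sum>j\<in>S6. X (7 - i) (7 - j) * u (7 - j)) = mv X u (7 - i)"
    unfolding mv_def by (rule reidx)
  finally show ?thesis .
qed

lemma star_star: "i \<in> S6 \<Longrightarrow> j \<in> S6 \<Longrightarrow> star (star X) i j = X i j"
  unfolding star_def by (simp add: S6_7)

lemma mv_Jc: "i \<in> S6 \<Longrightarrow> mv X (Jc u) i = Jc (mv (star X) u) i"
proof -
  assume i: "i \<in> S6"
  have "mv X (Jc u) i = mv (star (star X)) (Jc u) i" by (rule mv_mcong) (simp add: star_star i)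
  also have "\<dots> = Jc (mv (star X) u) i" by (simp only: mv_star) (simp add: Jc_def)
  finally show ?thesis .
qed

lemma ip_Jc: "ip (Jc u) (Jc w) = ip w u"
proof -
  have "ip (Jc u) (Jc w) = (\<Sum>i\<in>S6. cnj (w (7 - i)) * u (7 - i))" unfolding ip_def Jc_def by (simp add: mult.commute)
  also have "\<dots> = ip w u" unfolding ip_def by (rule reidx)
  finally show ?thesis .
qed

lemma qf_Jc: "qf X (Jc u) = cnj (qf (star X) u)"
proof -
  have "qf X (Jc u) = ip (Jc u) (Jc (mv (star X) u))" unfolding qf_def by (rule ip_cong) (auto simp: mv_Jc)
  also have "\<dots> = ip (mv (star X) u) u" by (rule ip_Jc)
  also have "\<dots> = cnj (qf (star X) u)" unfolding qf_def ip_cnj ..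
  finally show ?thesis .
qed

lemma ip_Jc_self: "ip (Jc u) u = 2 * (u 1 * u 6 + u 2 * u 5 + u 3 * u 4)"
  unfolding ip_def Jc_def sum_S6 by (simp add: algebra_simps)

lemma madd: "qf (\<lambda>i j. X i j + Y i j) u = qf X u + qf Y u"
proof -
  have "mv (\<lambda>i j. X i j + Y i j) u = (\<lambda>i. mv X u i + mv Y u i)"
    unfolding mv_def by (simp add: distrib_right sum.distrib)
  then show ?thesis unfolding qf_def by (simp only:) (rule ip_add_right)
qed

lemma bessel_R:
  assumes on: "orthonormal us"
  shows "(\<Sum>a<length us. (Re (qf R (us!a)))^2) \<le> fro R"
proof -
  define r where "r i = (\<lambda>j. cnj (R i j))" for i
  have Ru: "mv R u i = cnj (ip u (r i))" for u i
    unfolding mv_def ip_def r_def by (simp add: mult.commute)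
  have 1: "(Re (qf R u))^2 \<le> (\<Sum>i\<in>S6. (cmod (ip u (r i)))^2)" if u: "ip u u = 1" for u
  proof -
    have onu: "orthonormal [u]" using u by (simp add: orthonormal_def)
    have "(\<Sum>a<length [u]. (cmod (ip ([u]!a) (mv R u)))^2) \<le> Re (ip (mv R u) (mv R u))"
      by (rule bessel[OF onu])
    then have "(cmod (qf R u))^2 \<le> Re (ip (mv R u) (mv R u))" by (simp add: qf_def)
    moreover have "Re (ip (mv R u) (mv R u)) = (\<Sum>i\<in>S6. (cmod (ip u (r i)))^2)"
      unfolding ip_self_Re Ru by simp
    moreover have "(Re (qf R u))^2 \<le> (cmod (qf R u))^2"
      by (metis abs_Re_le_cmod abs_le_square_iff abs_norm_cancel)
    ultimately show ?thesis by linarith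
  qed
  have "(\<Sum>a<length us. (Re (qf R (us!a)))^2) \<le> (\<Sum>a<length us. \<Sum>i\<in>S6. (cmod (ip (us!a) (r i)))^2)"
    by (rule sum_mono, rule 1) (use on in \<open>auto simp: orthonormal_def\<close>)
  also have "\<dots> = (\<Sum>i\<in>S6. \<Sum>a<length us. (cmod (ip (us!a) (r i)))^2)" by (rule sum.swap)
  also have "\<dots> \<le> (\<Sum>i\<in>S6. Re (ip (r i) (r i)))" by (rule sum_mono, rule bessel[OF on])
  also have "\<dots> = fro R" unfolding fro_def ip_self_Re r_def by simp
  finally show ?thesis .
qed

lemma herm_comb1:
  assumes x: "herm X" and y: "herm Y"
  shows "herm (\<lambda>i j. (X i j + Y i j) / 2)"
  unfolding herm_def
proof (intro ballI)
  fix i j assume ij: "i \<in> S6" "j \<in> S6"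
  have "X j i = cnj (X i j)" "Y j i = cnj (Y i j)" using x y ij unfolding herm_def by blast+
  then show "(X j i + Y j i) / 2 = cnj ((X i j + Y i j) / 2)" by simp
qed

lemma herm_comb2:
  assumes x: "herm X" and y: "herm Y"
  shows "herm (\<lambda>i j. (X i j - Y i j) / 2)"
  unfolding herm_def
proof (intro ballI)
  fix i j assume ij: "i \<in> S6" "j \<in> S6"
  have "X j i = cnj (X i j)" "Y j i = cnj (Y i j)" using x y ij unfolding herm_def by blast+
  then show "(X j i - Y j i) / 2 = cnj ((X i j - Y i j) / 2)" by simp
qed

lemma qf_sum: "qf X z = (\<Sum>j=1..6. \<Sum>k=1..6. cnj (z j) * X j k * z k)"
  unfolding qf_def ip_def mv_def S6_def by (simp add: sum_distrib_left mult.assoc)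

theorem theorem5:
  fixes A :: "nat \<Rightarrow> nat \<Rightarrow> complex"
  assumes herm: "\<forall>j\<in>{1..6}. \<forall>k\<in>{1..6}. A k j = cnj (A j k)"
    and psd: "\<forall>z :: nat \<Rightarrow> complex.
               z 1 * z 6 + z 2 * z 5 + z 3 * z 4 = 0 \<longrightarrow>
               (\<Sum>j=1..6. \<Sum>k=1..6. cnj (z j) * A j k * z k) \<ge> 0"
  shows "(\<Sum>j=1..6. \<Sum>k=1..6. A j k * A (7 - j) (7 - k)) \<ge> 0"
proof -
  have hA: "herm A" unfolding herm_def S6_def using herm by blast
  define B where "B = star A"
  define R where "R = (\<lambda>i j. (A i j + B i j) / 2)"
  define H where "H = (\<lambda>i j. (A i j - B i j) / 2)"
  have hB: "herm B" unfolding herm_def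
  proof (intro ballI)
    fix i j assume ij: "i \<in> S6" "j \<in> S6"
    have "A (7 - i) (7 - j) = cnj (A (7 - j) (7 - i))" using hA S6_7(1)[OF ij(1)] S6_7(1)[OF ij(2)]
      unfolding herm_def by blast
    then show "B j i = cnj (B i j)" unfolding B_def star_def by simp
  qed
  have hR: "herm R" unfolding R_def by (rule herm_comb1[OF hA hB])
  have hH: "herm H" unfolding H_def by (rule herm_comb2[OF hA hB])
  have AB: "A = (\<lambda>i j. R i j + H i j)" unfolding R_def H_def by (intro ext) (simp add: field_simps)
  have BRH: "B i j = R i j - H i j" for i j unfolding R_def H_def by (simp add: field_simps)
  have sR: "star R i j = R i j" if "i \<in> S6" "j \<in> S6" for i j
    using star_star[OF that, of A] unfolding R_def star_def B_def by (simp add: add.commute)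
  have sH: "star H i j = - H i j" if "i \<in> S6" "j \<in> S6" for i j
    using star_star[OF that, of A] unfolding H_def star_def B_def by (simp add: field_simps)
  have G: "(\<Sum>j=1..6. \<Sum>k=1..6. A j k * A (7 - j) (7 - k)) = of_real (fro R - fro H)"
  proof -
    have "(\<Sum>j=1..6. \<Sum>k=1..6. A j k * A (7 - j) (7 - k)) = (\<Sum>j\<in>S6. \<Sum>k\<in>S6. (R j k + H j k) * cnj (R j k - H j k))"
    proof -
      have pw: "A j k * A (7 - j) (7 - k) = (R j k + H j k) * cnj (R j k - H j k)" for j k
      proof -
        have "A j k = R j k + H j k" unfolding R_def H_def by (simp add: field_simps)
        moreover have "cnj (B j k) = A (7 - j) (7 - k)" unfolding B_def star_def by simp
        ultimately show ?thesis by (simp add: BRH)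
      qed
      show ?thesis unfolding S6_def pw ..
    qed
    also have "\<dots> = Fc R - Fc H + ((\<Sum>j\<in>S6. \<Sum>k\<in>S6. H j k * cnj (R j k)) - (\<Sum>j\<in>S6. \<Sum>k\<in>S6. R j k * cnj (H j k)))"
      unfolding Fc_def by (simp add: algebra_simps sum.distrib sum_subtractf)
    also have "(\<Sum>j\<in>S6. \<Sum>k\<in>S6. H j k * cnj (R j k)) = (\<Sum>j\<in>S6. \<Sum>k\<in>S6. R j k * cnj (H j k))"
    proof -
      have "(\<Sum>j\<in>S6. \<Sum>k\<in>S6. H j k * cnj (R j k)) = (\<Sum>j\<in>S6. \<Sum>k\<in>S6. R k j * cnj (H k j))"
      proof (rule sum.cong[OF refl], rule sum.cong[OF refl])
        fix j k assume jk: "j \<in> S6" "k \<in> S6"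
        have "H j k = cnj (H k j)" "R j k = cnj (R k j)" using hH hR jk unfolding herm_def by blast+
        then show "H j k * cnj (R j k) = R k j * cnj (H k j)" by simp
      qed
      also have "\<dots> = (\<Sum>k\<in>S6. \<Sum>j\<in>S6. R k j * cnj (H k j))" by (rule sum.swap)
      finally show ?thesis .
    qed
    finally show ?thesis by (simp add: fro_Fc)
  qed
  obtain us ls where sp: "length us = length ls" "orthonormal us"
     "\<forall>a<length us. ls!a \<noteq> 0 \<and> (\<forall>i\<in>S6. mv H (us!a) i = of_real (ls!a) * (us!a) i)"
     "fro H = (\<Sum>a<length ls. (ls!a)^2)"
    using spectral[OF hH] by blast
  have key: "(ls!a)^2 \<le> (Re (qf R (us!a)))^2" if a: "a < length us" for a
  proof -
    define u where "u = us!a"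
    define l where "l = ls!a"
    have uu: "ip u u = 1" using sp(2) a unfolding orthonormal_def u_def by auto
    have l0: "l \<noteq> 0" and ev: "\<forall>i\<in>S6. mv H u i = of_real l * u i" using sp(3) a unfolding u_def l_def by auto
    have evJ: "mv H (Jc u) i = - of_real l * Jc u i" if i: "i \<in> S6" for i
    proof -
      have "mv (star H) u (7 - i) = mv (\<lambda>i j. - H i j) u (7 - i)"
        by (rule mv_mcong) (simp add: sH S6_7 i)
      also have "\<dots> = - (of_real l * u (7 - i))" using mv_neg ev S6_7(1)[OF i] by simp
      finally show ?thesis using mv_Jc[OF i, of H u] unfolding Jc_def by simp
    qed
    have "of_real l * ip (Jc u) u = ip (Jc u) (\<lambda>i. of_real l * u i)" by (simp add: ip_scale_right)
    also have "\<dots> = ip (Jc u) (mv H u)" by (rule ip_cong) (auto simp: ev)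
    also have "\<dots> = ip (mv H (Jc u)) u" by (rule herm_swap[OF hH])
    also have "\<dots> = ip (\<lambda>i. (- of_real l) * Jc u i) u" by (rule ip_cong) (auto simp: evJ)
    also have "\<dots> = - of_real l * ip (Jc u) u" using ip_scale_left[of "- of_real l" "Jc u" u] by simp
    finally have "2 * of_real l * ip (Jc u) u = 0" by simp
    then have "ip (Jc u) u = 0" using l0 by simp
    then have null: "u 1 * u 6 + u 2 * u 5 + u 3 * u 4 = 0" using ip_Jc_self[of u] by (metis mult_eq_0_iff zero_neq_numeral)
    have nullJ: "Jc u 1 * Jc u 6 + Jc u 2 * Jc u 5 + Jc u 3 * Jc u 4 = 0"
    proof -
      have "Jc u 1 * Jc u 6 + Jc u 2 * Jc u 5 + Jc u 3 * Jc u 4 = cnj (u 1 * u 6 + u 2 * u 5 + u 3 * u 4)"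
        by (simp add: Jc_def mult.commute)
      then show ?thesis unfolding null by simp
    qed
    have p1: "0 \<le> Re (qf A u)" using psd null unfolding qf_sum[symmetric] by (auto simp: less_eq_complex_def)
    have p2: "0 \<le> Re (qf A (Jc u))" using psd nullJ unfolding qf_sum[symmetric] by (auto simp: less_eq_complex_def)
    have qH: "qf H u = of_real l"
    proof -
      have "qf H u = ip u (\<lambda>i. of_real l * u i)" unfolding qf_def by (rule ip_cong) (auto simp: ev)
      then show ?thesis using uu by (simp add: ip_scale_right)
    qed
    have qRJ: "Re (qf R (Jc u)) = Re (qf R u)"
    proof -
      have "qf (star R) u = qf R u" by (rule qf_mcong) (simp add: sR)
      then show ?thesis unfolding qf_Jc by simp
    qed
    have qHJ: "Re (qf H (Jc u)) = - l"
    proof -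
      have "qf (star H) u = qf (\<lambda>i j. - H i j) u" by (rule qf_mcong) (simp add: sH)
      then show ?thesis unfolding qf_Jc qf_neg qH by simp
    qed
    have 1: "0 \<le> Re (qf R u) + l" using p1 unfolding AB madd qH by simp
    have 2: "0 \<le> Re (qf R u) - l" using p2 unfolding AB madd using qRJ qHJ by simp
    have "\<bar>l\<bar> \<le> Re (qf R u)" using 1 2 by linarith
    then have "l^2 \<le> (Re (qf R u))^2" by (metis abs_le_square_iff abs_of_nonneg abs_ge_zero order_trans)
    then show ?thesis unfolding u_def l_def .
  qed
  have "fro H \<le> (\<Sum>a<length us. (Re (qf R (us!a)))^2)"
    unfolding sp(4) sp(1)[symmetric] by (rule sum_mono) (use key in auto)
  also have "\<dots> \<le> fro R" by (rule bessel_R[OF sp(2)])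
  finally have "0 \<le> fro R - fro H" by simp
  then show ?thesis unfolding G by (simp add: less_eq_complex_def)
qed

end
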